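(* Let $G$ be a finitely generated group, $(\mathfrak C,D,\mathfrak B)$ a differential category over $\mathbb F$ (where $\mathbb F=\mathbb R$ or $\mathbb C$), and $R$ a representation of $G$ in $\mathfrak C$. Then either (i) $R$ is trivial, or (ii) $D\circ R$ is non-trivial, or (iii) there exists a non-trivial representation of $G$ in $\mathbb F$, i.e. a non-trivial group homomorphism $G\to(\mathbb F,+)$.
   Context: A right linear category over $\mathbb F$ is a category $\mathfrak C$ in which each hom set $\mathfrak C(a,a')$ is an $\mathbb F$-vector space (with zero $0_{a',a}$), such that for every $c\in\mathfrak C(a,a')$ the map $-\circ c:\mathfrak C(a',a'')\to\mathfrak C(a,a'')$ is linear, and $f\circ 0_{a',a}=0_{a'',a}$ for all $f\in\mathfrak C(a',a'')$. A linear category additionally satisfies the dual conditions ($c\circ-$ linear and $0\circ f=0$). A norm on $\mathfrak C$ is a choice of norm on each hom space; it is submultiplicative if $\|1_a\|=1$ and $\|c'\circ c\|\le\|c'\|\|c\|$. A Banach category is a linear category with a submultiplicative norm for which every hom space is complete. A functor between right linear categories is linear if it is linear on each hom space. A $\mathfrak B$-differential on a right linear category $\mathfrak C$ is a linear functor $D:\mathfrak C\to\mathfrak B$ into a Banach category $\mathfrak B$ for which there exists a sequence $(\|\cdot\|_n)_{n\ge1}$ of norms on $\mathfrak C$ (norms on each hom space) with $\limsup_{n\to\infty}\frac{\|c\circ c'-c\circ c''\|_n}{\|c'-c''\|_n}\le\|Dc\|$ for all $c\in\mathfrak C(a',a'')$ and all distinct $c',c''\in\mathfrak C(a,a')$;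 a differential category is such a triple $(\mathfrak C,D,\mathfrak B)$. A representation of the group $G$ in a category $\mathfrak C$ is a functor from $G$ (viewed as a one-object groupoid) to $\mathfrak C$, i.e. a homomorphism $R:G\to\mathfrak C^{-1}(a,a)$ into the group of invertible endomorphisms of some object $a$; it is trivial if it is constant (equal to $1_a$). *)

theory Defs
  imports "HOL-Analysis.Analysis" "HOL-Algebra.Generated_Groups"
begin

text \<open>A (small) category with explicit hom sets, together with linear structure
  on each hom set over a scalar field 'f.  zerom a a', addm a a', scalem a a'
  are the zero, addition and scalar multiplication of the hom space Hom a a'
  (i.e. of C(a,a')).  cmp g f is the composite g o f.\<close>

record ('o, 'm, 'f) lincat =
  Obj    :: "'o set"
  Hom    :: "'o \<Rightarrow> 'o \<Rightarrow> 'm set"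
  cmp    :: "'m \<Rightarrow> 'm \<Rightarrow> 'm"
  idm    :: "'o \<Rightarrow> 'm"
  addm   :: "'o \<Rightarrow> 'o \<Rightarrow> 'm \<Rightarrow> 'm \<Rightarrow> 'm"
  scalem :: "'o \<Rightarrow> 'o \<Rightarrow> 'f \<Rightarrow> 'm \<Rightarrow> 'm"
  zerom  :: "'o \<Rightarrow> 'o \<Rightarrow> 'm"

definition is_category :: "('o, 'm, 'f) lincat \<Rightarrow> bool" where
  "is_category C \<longleftrightarrow>
     (\<forall>a\<in>Obj C. \<forall>a'\<in>Obj C. \<forall>b\<in>Obj C. \<forall>b'\<in>Obj C.
        Hom C a a' \<inter> Hom C b b' \<noteq> {} \<longrightarrow> a = b \<and> a' = b') \<and>
     (\<forall>a\<in>Obj C. idm C a \<in> Hom C a a) \<and>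
     (\<forall>a\<in>Obj C. \<forall>a'\<in>Obj C. \<forall>a''\<in>Obj C. \<forall>f\<in>Hom C a a'. \<forall>g\<in>Hom C a' a''.
        cmp C g f \<in> Hom C a a'') \<and>
     (\<forall>a\<in>Obj C. \<forall>a'\<in>Obj C. \<forall>a''\<in>Obj C. \<forall>a'''\<in>Obj C.
        \<forall>f\<in>Hom C a a'. \<forall>g\<in>Hom C a' a''. \<forall>h\<in>Hom C a'' a'''.
        cmp C h (cmp C g f) = cmp C (cmp C h g) f) \<and>
     (\<forall>a\<in>Obj C. \<forall>a'\<in>Obj C. \<forall>f\<in>Hom C a a'.
        cmp C f (idm C a) = f \<and> cmp C (idm C a') f = f)"

definition vector_space_on ::
  "'m set \<Rightarrow> ('m \<Rightarrow> 'm \<Rightarrow> 'm) \<Rightarrow> ('f::field \<Rightarrow> 'm \<Rightarrow> 'm) \<Rightarrow> 'm \<Rightarrow> bool" where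
  "vector_space_on H add sc z \<longleftrightarrow>
     z \<in> H \<and>
     (\<forall>x\<in>H. \<forall>y\<in>H. add x y \<in> H) \<and>
     (\<forall>k. \<forall>x\<in>H. sc k x \<in> H) \<and>
     (\<forall>x\<in>H. \<forall>y\<in>H. \<forall>w\<in>H. add (add x y) w = add x (add y w)) \<and>
     (\<forall>x\<in>H. \<forall>y\<in>H. add x y = add y x) \<and>
     (\<forall>x\<in>H. add z x = x) \<and>
     (\<forall>x\<in>H. \<exists>y\<in>H. add x y = z) \<and>
     (\<forall>x\<in>H. sc 1 x = x) \<and>
     (\<forall>k l. \<forall>x\<in>H. sc (k * l) x = sc k (sc l x)) \<and>
     (\<forall>k. \<forall>x\<in>H. \<forall>y\<in>H. sc k (add x y) = add (sc k x) (sc k y)) \<and>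
     (\<forall>k l. \<forall>x\<in>H. sc (k + l) x = add (sc k x) (sc l x))"

definition linear_map_on ::
  "'m set \<Rightarrow> ('m \<Rightarrow> 'm \<Rightarrow> 'm) \<Rightarrow> ('f \<Rightarrow> 'm \<Rightarrow> 'm) \<Rightarrow>
   'n set \<Rightarrow> ('n \<Rightarrow> 'n \<Rightarrow> 'n) \<Rightarrow> ('f \<Rightarrow> 'n \<Rightarrow> 'n) \<Rightarrow> ('m \<Rightarrow> 'n) \<Rightarrow> bool" where
  "linear_map_on H1 add1 sc1 H2 add2 sc2 F \<longleftrightarrow>
     (\<forall>x\<in>H1. F x \<in> H2) \<and>
     (\<forall>x\<in>H1. \<forall>y\<in>H1. F (add1 x y) = add2 (F x) (F y)) \<and>
     (\<forall>k. \<forall>x\<in>H1. F (sc1 k x) = sc2 k (F x))"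

definition subm :: "('o, 'm, 'f::field) lincat \<Rightarrow> 'o \<Rightarrow> 'o \<Rightarrow> 'm \<Rightarrow> 'm \<Rightarrow> 'm" where
  "subm C a a' x y = addm C a a' x (scalem C a a' (-1) y)"

definition right_linear_category :: "('o, 'm, 'f::field) lincat \<Rightarrow> bool" where
  "right_linear_category C \<longleftrightarrow>
     is_category C \<and>
     (\<forall>a\<in>Obj C. \<forall>a'\<in>Obj C.
        vector_space_on (Hom C a a') (addm C a a') (scalem C a a') (zerom C a a')) \<and>
     (\<forall>a\<in>Obj C. \<forall>a'\<in>Obj C. \<forall>a''\<in>Obj C. \<forall>c\<in>Hom C a a'.
        linear_map_on (Hom C a' a'') (addm C a' a'') (scalem C a' a'')
                      (Hom C a a'') (addm C a a'') (scalem C a a'') (\<lambda>f. cmp C f c)) \<and>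
     (\<forall>a\<in>Obj C. \<forall>a'\<in>Obj C. \<forall>a''\<in>Obj C. \<forall>f\<in>Hom C a' a''.
        cmp C f (zerom C a a') = zerom C a a'')"

definition linear_category :: "('o, 'm, 'f::field) lincat \<Rightarrow> bool" where
  "linear_category C \<longleftrightarrow>
     right_linear_category C \<and>
     (\<forall>a\<in>Obj C. \<forall>a'\<in>Obj C. \<forall>a''\<in>Obj C. \<forall>c\<in>Hom C a' a''.
        linear_map_on (Hom C a a') (addm C a a') (scalem C a a')
                      (Hom C a a'') (addm C a a'') (scalem C a a'') (\<lambda>f. cmp C c f)) \<and>
     (\<forall>a\<in>Obj C. \<forall>a'\<in>Obj C. \<forall>a''\<in>Obj C. \<forall>f\<in>Hom C a a'.
        cmp C (zerom C a' a'') f = zerom C a a'')"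

definition norm_on ::
  "'m set \<Rightarrow> ('m \<Rightarrow> 'm \<Rightarrow> 'm) \<Rightarrow> ('f::real_normed_field \<Rightarrow> 'm \<Rightarrow> 'm) \<Rightarrow> 'm \<Rightarrow> ('m \<Rightarrow> real) \<Rightarrow> bool" where
  "norm_on H add sc z N \<longleftrightarrow>
     (\<forall>x\<in>H. N x \<ge> 0) \<and>
     (\<forall>x\<in>H. N x = 0 \<longleftrightarrow> x = z) \<and>
     (\<forall>k. \<forall>x\<in>H. N (sc k x) = norm k * N x) \<and>
     (\<forall>x\<in>H. \<forall>y\<in>H. N (add x y) \<le> N x + N y)"

definition banach_category ::
  "('p, 'n, 'f::real_normed_field) lincat \<Rightarrow> ('p \<Rightarrow> 'p \<Rightarrow> 'n \<Rightarrow> real) \<Rightarrow> bool" where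
  "banach_category B N \<longleftrightarrow>
     linear_category B \<and>
     (\<forall>b\<in>Obj B. \<forall>b'\<in>Obj B.
        norm_on (Hom B b b') (addm B b b') (scalem B b b') (zerom B b b') (N b b')) \<and>
     (\<forall>b\<in>Obj B. N b b (idm B b) = 1) \<and>
     (\<forall>b\<in>Obj B. \<forall>b'\<in>Obj B. \<forall>b''\<in>Obj B. \<forall>f\<in>Hom B b b'. \<forall>g\<in>Hom B b' b''.
        N b b'' (cmp B g f) \<le> N b' b'' g * N b b' f) \<and>
     (\<forall>b\<in>Obj B. \<forall>b'\<in>Obj B. \<forall>s::nat \<Rightarrow> 'n.
        (\<forall>n. s n \<in> Hom B b b') \<and>
        (\<forall>e>0. \<exists>K. \<forall>m\<ge>K. \<forall>n\<ge>K. N b b' (subm B b b' (s m) (s n)) < e) \<longrightarrow>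
        (\<exists>x\<in>Hom B b b'. \<forall>e>0. \<exists>K. \<forall>n\<ge>K. N b b' (subm B b b' (s n) x) < e))"

definition linear_functor ::
  "('o, 'm, 'f::field) lincat \<Rightarrow> ('p, 'n, 'f) lincat \<Rightarrow> ('o \<Rightarrow> 'p) \<Rightarrow> ('m \<Rightarrow> 'n) \<Rightarrow> bool" where
  "linear_functor C B Fo Fm \<longleftrightarrow>
     (\<forall>a\<in>Obj C. Fo a \<in> Obj B) \<and>
     (\<forall>a\<in>Obj C. \<forall>a'\<in>Obj C. \<forall>c\<in>Hom C a a'. Fm c \<in> Hom B (Fo a) (Fo a')) \<and>
     (\<forall>a\<in>Obj C. Fm (idm C a) = idm B (Fo a)) \<and>
     (\<forall>a\<in>Obj C. \<forall>a'\<in>Obj C. \<forall>a''\<in>Obj C. \<forall>f\<in>Hom C a a'. \<forall>g\<in>Hom C a' a''.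
        Fm (cmp C g f) = cmp B (Fm g) (Fm f)) \<and>
     (\<forall>a\<in>Obj C. \<forall>a'\<in>Obj C.
        linear_map_on (Hom C a a') (addm C a a') (scalem C a a')
                      (Hom B (Fo a) (Fo a')) (addm B (Fo a) (Fo a')) (scalem B (Fo a) (Fo a')) Fm)"

text \<open>(C, D, B) is a differential category: D = (Do, Dm) is a B-differential
  on the right linear category C, B being a Banach category with norm NB.
  nu n a a' is the n-th norm on C(a,a').\<close>
definition differential_category ::
  "('o, 'm, 'f::real_normed_field) lincat \<Rightarrow> ('o \<Rightarrow> 'p) \<Rightarrow> ('m \<Rightarrow> 'n) \<Rightarrow>
   ('p, 'n, 'f) lincat \<Rightarrow> ('p \<Rightarrow> 'p \<Rightarrow> 'n \<Rightarrow> real) \<Rightarrow> bool" where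
  "differential_category C Do Dm B NB \<longleftrightarrow>
     right_linear_category C \<and> banach_category B NB \<and> linear_functor C B Do Dm \<and>
     (\<exists>nu :: nat \<Rightarrow> 'o \<Rightarrow> 'o \<Rightarrow> 'm \<Rightarrow> real.
        (\<forall>n\<ge>1. \<forall>a\<in>Obj C. \<forall>a'\<in>Obj C.
           norm_on (Hom C a a') (addm C a a') (scalem C a a') (zerom C a a') (nu n a a')) \<and>
        (\<forall>a\<in>Obj C. \<forall>a'\<in>Obj C. \<forall>a''\<in>Obj C. \<forall>c\<in>Hom C a' a''.
           \<forall>c'\<in>Hom C a a'. \<forall>c''\<in>Hom C a a'. c' \<noteq> c'' \<longrightarrow>
             limsup (\<lambda>n. ereal (nu (Suc n) a a'' (subm C a a'' (cmp C c c') (cmp C c c''))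
                                / nu (Suc n) a a' (subm C a a' c' c'')))
               \<le> ereal (NB (Do a') (Do a'') (Dm c))))"

definition finitely_generated_group :: "('g, 'x) monoid_scheme \<Rightarrow> bool" where
  "finitely_generated_group G \<longleftrightarrow>
     group G \<and> (\<exists>S. finite S \<and> S \<subseteq> carrier G \<and> generate G S = carrier G)"

definition representation ::
  "('g, 'x) monoid_scheme \<Rightarrow> ('o, 'm, 'f) lincat \<Rightarrow> 'o \<Rightarrow> ('g \<Rightarrow> 'm) \<Rightarrow> bool" where
  "representation G C a R \<longleftrightarrow>
     a \<in> Obj C \<and>
     (\<forall>g\<in>carrier G. R g \<in> Hom C a a \<and>
        (\<exists>h\<in>Hom C a a. cmp C (R g) h = idm C a \<and> cmp C h (R g) = idm C a)) \<and>
     R \<one>\<^bsub>G\<^esub> = idm C a \<and>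
     (\<forall>x\<in>carrier G. \<forall>y\<in>carrier G. R (x \<otimes>\<^bsub>G\<^esub> y) = cmp C (R x) (R y))"

definition trivial_representation ::
  "('g, 'x) monoid_scheme \<Rightarrow> ('o, 'm, 'f) lincat \<Rightarrow> 'o \<Rightarrow> ('g \<Rightarrow> 'm) \<Rightarrow> bool" where
  "trivial_representation G C a R \<longleftrightarrow> (\<forall>g\<in>carrier G. R g = idm C a)"

end

theory Submission
  imports Defs "HOL-Library.Function_Algebras" "HOL-Algebra.FiniteProduct"
begin

locale vsp =
  fixes H :: "'m set" and add :: "'m \<Rightarrow> 'm \<Rightarrow> 'm" and sc :: "'f::field \<Rightarrow> 'm \<Rightarrow> 'm" and z :: 'm
  assumes vs: "vector_space_on H add sc z"
begin

definition VG :: "'m monoid" where "VG = \<lparr>carrier = H, mult = add, one = z\<rparr>"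

lemma VG_simps[simp]: "carrier VG = H" "mult VG = add" "one VG = z"
  by (auto simp: VG_def)

lemma ax: "z \<in> H" "\<And>x y. x \<in> H \<Longrightarrow> y \<in> H \<Longrightarrow> add x y \<in> H"
  "\<And>k x. x \<in> H \<Longrightarrow> sc k x \<in> H"
  "\<And>x y w. x \<in> H \<Longrightarrow> y \<in> H \<Longrightarrow> w \<in> H \<Longrightarrow> add (add x y) w = add x (add y w)"
  "\<And>x y. x \<in> H \<Longrightarrow> y \<in> H \<Longrightarrow> add x y = add y x"
  "\<And>x. x \<in> H \<Longrightarrow> add z x = x"
  "\<And>x. x \<in> H \<Longrightarrow> \<exists>y\<in>H. add x y = z"
  "\<And>x. x \<in> H \<Longrightarrow> sc 1 x = x"
  "\<And>k l x. x \<in> H \<Longrightarrow> sc (k * l) x = sc k (sc l x)"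
  "\<And>k x y. x \<in> H \<Longrightarrow> y \<in> H \<Longrightarrow> sc k (add x y) = add (sc k x) (sc k y)"
  "\<And>k l x. x \<in> H \<Longrightarrow> sc (k + l) x = add (sc k x) (sc l x)"
  using vs unfolding vector_space_on_def by auto

lemma cg: "comm_group VG"
proof (rule comm_groupI)
  show "\<And>x y. x \<in> carrier VG \<Longrightarrow> y \<in> carrier VG \<Longrightarrow> x \<otimes>\<^bsub>VG\<^esub> y \<in> carrier VG"
    using ax by simp
  show "\<one>\<^bsub>VG\<^esub> \<in> carrier VG" using ax by simp
  show "\<And>x y z. x \<in> carrier VG \<Longrightarrow> y \<in> carrier VG \<Longrightarrow> z \<in> carrier VG \<Longrightarrow>
      x \<otimes>\<^bsub>VG\<^esub> y \<otimes>\<^bsub>VG\<^esub> z = x \<otimes>\<^bsub>VG\<^esub> (y \<otimes>\<^bsub>VG\<^esub> z)" using ax by simp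
  show "\<And>x y. x \<in> carrier VG \<Longrightarrow> y \<in> carrier VG \<Longrightarrow> x \<otimes>\<^bsub>VG\<^esub> y = y \<otimes>\<^bsub>VG\<^esub> x"
    using ax by simp
  show "\<And>x. x \<in> carrier VG \<Longrightarrow> \<one>\<^bsub>VG\<^esub> \<otimes>\<^bsub>VG\<^esub> x = x" using ax by simp
  show "\<And>x. x \<in> carrier VG \<Longrightarrow> \<exists>y\<in>carrier VG. y \<otimes>\<^bsub>VG\<^esub> x = \<one>\<^bsub>VG\<^esub>"
    using ax by simp
qed

sublocale V: comm_group VG by (rule cg)

lemmas Vinv_closed = V.inv_closed[unfolded VG_simps]
lemmas Vr_inv = V.r_inv[unfolded VG_simps]
lemmas Vl_inv = V.l_inv[unfolded VG_simps]
lemmas Vassoc = V.m_assoc[unfolded VG_simps]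
lemmas Vinv_mult = V.inv_mult[unfolded VG_simps]
lemmas Vinv_inv = V.inv_inv[unfolded VG_simps]
lemmas Vinv_equality = V.inv_equality[unfolded VG_simps]
lemmas Vr_one = V.r_one[unfolded VG_simps]

lemma sc0: "x \<in> H \<Longrightarrow> sc 0 x = z"
proof -
  assume x: "x \<in> H"
  have "sc 0 x = add (sc 0 x) (sc 0 x)" using ax(11)[OF x, of 0 0] by simp
  then show ?thesis using V.l_cancel_one'[of "sc 0 x" "sc 0 x"] ax(3)[OF x] by simp
qed

lemma scz: "sc k z = z"
proof -
  have "sc k z = add (sc k z) (sc k z)" using ax(10)[of z z k] ax(1) ax(6) by simp
  then show ?thesis using V.l_cancel_one'[of "sc k z" "sc k z"] ax(3)[OF ax(1)] by simp
qed

lemma scm1: "x \<in> H \<Longrightarrow> sc (-1) x = inv\<^bsub>VG\<^esub> x"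
proof -
  assume x: "x \<in> H"
  have "add (sc (-1) x) x = z" using ax(11)[OF x, of "-1" 1] ax(8)[OF x] sc0[OF x] by simp
  then show ?thesis using V.inv_equality[of "sc (-1) x" x] x ax(3)[OF x] by simp
qed

lemma sc_inv: "x \<in> H \<Longrightarrow> sc k (inv\<^bsub>VG\<^esub> x) = inv\<^bsub>VG\<^esub> (sc k x)"
proof -
  assume x: "x \<in> H"
  have "sc k (inv\<^bsub>VG\<^esub> x) = sc k (sc (-1) x)" using scm1[OF x] by simp
  also have "\<dots> = sc (-1) (sc k x)" using ax(9)[OF x, of k "-1"] ax(9)[OF x, of "-1" k] by (simp add: mult.commute)
  also have "\<dots> = inv\<^bsub>VG\<^esub> (sc k x)" using scm1 ax(3)[OF x] by simp
  finally show ?thesis .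
qed

lemma add_neg_self: "x \<in> H \<Longrightarrow> add x (sc (-1) x) = z"
  using scm1 V.r_inv[of x] by simp

lemma sc_finprod: "finite A \<Longrightarrow> f \<in> A \<rightarrow> H \<Longrightarrow> sc k (finprod VG f A) = finprod VG (\<lambda>x. sc k (f x)) A"
proof (induction A rule: finite_induct)
  case empty then show ?case by (simp add: scz V.finprod_empty)
next
  case (insert x F)
  then have fx: "f x \<in> H" and fF: "f \<in> F \<rightarrow> H" by auto
  have "finprod VG f (insert x F) = add (f x) (finprod VG f F)"
    using V.finprod_insert[of F x f] insert fF fx by simp
  moreover have "finprod VG (\<lambda>x. sc k (f x)) (insert x F) = add (sc k (f x)) (finprod VG (\<lambda>x. sc k (f x)) F)"
  proof -
    have "(\<lambda>x. sc k (f x)) \<in> F \<rightarrow> H" using fF ax(3) by auto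
    then show ?thesis using V.finprod_insert[of F x "\<lambda>x. sc k (f x)"] insert fx ax(3) by simp
  qed
  ultimately show ?case using insert fF fx ax(10) V.finprod_closed[of f F] by simp
qed

end

locale nrm = vsp H add sc z for H :: "'m set" and add and sc :: "'f::real_normed_field \<Rightarrow> 'm \<Rightarrow> 'm" and z +
  fixes N :: "'m \<Rightarrow> real"
  assumes nm: "norm_on H add sc z N"
begin

lemma nax: "\<And>x. x \<in> H \<Longrightarrow> N x \<ge> 0" "\<And>x. x \<in> H \<Longrightarrow> N x = 0 \<longleftrightarrow> x = z"
  "\<And>k x. x \<in> H \<Longrightarrow> N (sc k x) = norm k * N x"
  "\<And>x y. x \<in> H \<Longrightarrow> y \<in> H \<Longrightarrow> N (add x y) \<le> N x + N y"
  using nm unfolding norm_on_def by auto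

lemma N_inv: "x \<in> H \<Longrightarrow> N (inv\<^bsub>VG\<^esub> x) = N x"
  using nax(3)[of x "-1"] scm1 by simp

lemma N_z: "N z = 0" using nax(2) ax(1) by simp

end


interpretation fv: vector_space_pair "\<lambda>c (f::'a \<Rightarrow> real) x. c * f x" "(*) :: real \<Rightarrow> real \<Rightarrow> real"
  by unfold_locales (auto simp: fun_eq_iff algebra_simps)

definition dl :: "'g \<Rightarrow> 'g \<Rightarrow> real" where "dl x = (\<lambda>y. if y = x then 1 else 0)"


locale core = vsp H add sc z
  for H :: "'m set" and add and sc :: "'f::real_normed_field \<Rightarrow> 'm \<Rightarrow> 'm" and z +
  fixes N :: "nat \<Rightarrow> 'm \<Rightarrow> real"
    and G :: "('g, 'x) monoid_scheme" and S :: "'g set" and R :: "'g \<Rightarrow> 'm" and e :: 'm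
  assumes nm: "\<And>n. norm_on H add sc z (N n)"
  and grp: "group G" and finS: "finite S" and SG: "S \<subseteq> carrier G" and gen: "generate G S = carrier G"
  and RH: "\<And>g. g \<in> carrier G \<Longrightarrow> R g \<in> H" and eH: "e \<in> H" and R1: "R \<one>\<^bsub>G\<^esub> = e"
  and Rmul_e: "\<And>g h. g \<in> carrier G \<Longrightarrow> h \<in> carrier G \<Longrightarrow> R h = e \<Longrightarrow> R (g \<otimes>\<^bsub>G\<^esub> h) = R g"
  and nontriv: "\<exists>s\<in>S. R s \<noteq> e"
  and A: "\<And>g h \<epsilon>. g \<in> carrier G \<Longrightarrow> h \<in> carrier G \<Longrightarrow> R h \<noteq> e \<Longrightarrow> \<epsilon> > 0 \<Longrightarrow>
     \<forall>\<^sub>F n in sequentially. N n (add (add (R (g \<otimes>\<^bsub>G\<^esub> h)) (sc (-1) (R h))) (sc (-1) (add (R g) (sc (-1) e))))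
        / N n (add (R h) (sc (-1) e)) < \<epsilon>"
  and B: "\<And>g h. g \<in> carrier G \<Longrightarrow> h \<in> carrier G \<Longrightarrow> R h \<noteq> e \<Longrightarrow>
     \<forall>\<^sub>F n in sequentially. N n (add (R (g \<otimes>\<^bsub>G\<^esub> h)) (sc (-1) (R g))) / N n (add (R h) (sc (-1) e)) < 2"
begin

lemma nax: "\<And>x. x \<in> H \<Longrightarrow> N n x \<ge> 0" "\<And>x. x \<in> H \<Longrightarrow> N n x = 0 \<longleftrightarrow> x = z"
  "\<And>k x. x \<in> H \<Longrightarrow> N n (sc k x) = norm k * N n x"
  "\<And>x y. x \<in> H \<Longrightarrow> y \<in> H \<Longrightarrow> N n (add x y) \<le> N n x + N n y"
  using nm[of n] unfolding norm_on_def by auto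

lemma N_inv: "x \<in> H \<Longrightarrow> N n (inv\<^bsub>VG\<^esub> x) = N n x"
  using nax(3)[where k="-1" and x=x and n=n] scm1 by simp

lemma N_z: "N n z = 0" using nax(2) ax(1) by simp

lemma N_real: "x \<in> H \<Longrightarrow> N n (sc (of_real c) x) = \<bar>c\<bar> * N n x"
  using nax(3) by simp

interpretation Gp: group G by (rule grp)

definition w :: "'g \<Rightarrow> 'm" where "w g = add (R g) (inv\<^bsub>VG\<^esub> e)"

lemma wH: "g \<in> carrier G \<Longrightarrow> w g \<in> H"
  unfolding w_def using RH eH V.inv_closed ax(2) by simp

lemma inv_sc: "x \<in> H \<Longrightarrow> sc (-1) x = inv\<^bsub>VG\<^esub> x" by (rule scm1)

lemma w_alt: "g \<in> carrier G \<Longrightarrow> add (R g) (sc (-1) e) = w g"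
  unfolding w_def using scm1 eH by simp

definition M :: "nat \<Rightarrow> real" where "M n = Max ((\<lambda>s. N n (w s)) ` S)"

lemma Sne: "S \<noteq> {}" using nontriv by auto

lemma M_ge: "s \<in> S \<Longrightarrow> N n (w s) \<le> M n"
  unfolding M_def using finS by (intro Max_ge) auto

lemma M_attained: "\<exists>s\<in>S. M n = N n (w s)"
proof -
  have "M n \<in> (\<lambda>s. N n (w s)) ` S" unfolding M_def using finS Sne by (intro Max_in) auto
  then show ?thesis by auto
qed

lemma w_z_iff: "g \<in> carrier G \<Longrightarrow> w g = z \<longleftrightarrow> R g = e"
proof -
  assume g: "g \<in> carrier G"
  show ?thesis
  proof
    assume "w g = z"
    then have "add (inv\<^bsub>VG\<^esub> e) (R g) = z" unfolding w_def using ax(5) RH[OF g] eH Vinv_closed by metis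
    then have "inv\<^bsub>VG\<^esub> (R g) = inv\<^bsub>VG\<^esub> e" using Vinv_equality RH[OF g] eH Vinv_closed by metis
    then show "R g = e" using Vinv_inv RH[OF g] eH by metis
  next
    assume "R g = e"
    then show "w g = z" unfolding w_def using Vr_inv eH by simp
  qed
qed

lemma wpos: "h \<in> carrier G \<Longrightarrow> R h \<noteq> e \<Longrightarrow> N n (add (R h) (sc (-1) e)) > 0"
proof -
  assume h: "h \<in> carrier G" "R h \<noteq> e"
  then have "w h \<noteq> z" using w_z_iff by auto
  then show ?thesis using nax(1,2)[OF wH[OF h(1)]] w_alt[OF h(1)] by (metis less_eq_real_def)
qed

lemma A': "g \<in> carrier G \<Longrightarrow> h \<in> carrier G \<Longrightarrow> R h \<noteq> e \<Longrightarrow> \<epsilon> > 0 \<Longrightarrow>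
     \<forall>\<^sub>F n in sequentially. N n (add (add (R (g \<otimes>\<^bsub>G\<^esub> h)) (sc (-1) (R h))) (sc (-1) (add (R g) (sc (-1) e))))
        < \<epsilon> * N n (add (R h) (sc (-1) e))"
  using A[of g h \<epsilon>] wpos[of h] by (auto elim!: eventually_mono simp: pos_divide_less_eq mult.commute)

lemma B': "g \<in> carrier G \<Longrightarrow> h \<in> carrier G \<Longrightarrow> R h \<noteq> e \<Longrightarrow>
     \<forall>\<^sub>F n in sequentially. N n (add (R (g \<otimes>\<^bsub>G\<^esub> h)) (sc (-1) (R g))) < 2 * N n (add (R h) (sc (-1) e))"
  using B[of g h] wpos[of h] by (auto elim!: eventually_mono simp: pos_divide_less_eq mult.commute)

lemma M_pos: "M n > 0"
proof -
  obtain s where s: "s \<in> S" "R s \<noteq> e" using nontriv by auto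
  then have "w s \<noteq> z" using w_z_iff SG by auto
  then have "N n (w s) > 0" using nax(1,2)[OF wH] s SG by (metis less_eq_real_def subsetD)
  then show ?thesis using M_ge[OF s(1), of n] by linarith
qed

lemma M_nonneg: "M n \<ge> 0" using M_pos less_imp_le by blast

lemma w_one: "w \<one>\<^bsub>G\<^esub> = z"
  using w_z_iff R1 by simp


lemma grp_cancel: "x \<in> H \<Longrightarrow> y \<in> H \<Longrightarrow> u \<in> H \<Longrightarrow>
   add (add x (inv\<^bsub>VG\<^esub> y)) (add y (inv\<^bsub>VG\<^esub> u)) = add x (inv\<^bsub>VG\<^esub> u)"
proof -
  assume x: "x \<in> H" and y: "y \<in> H" and u: "u \<in> H"
  note as = Vassoc
  have iy: "inv\<^bsub>VG\<^esub> y \<in> H" and iu: "inv\<^bsub>VG\<^esub> u \<in> H" using x y u Vinv_closed by auto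
  have "add (add x (inv\<^bsub>VG\<^esub> y)) (add y (inv\<^bsub>VG\<^esub> u)) = add x (add (inv\<^bsub>VG\<^esub> y) (add y (inv\<^bsub>VG\<^esub> u)))"
    using as x iy y iu ax(2) by simp
  also have "\<dots> = add x (add (add (inv\<^bsub>VG\<^esub> y) y) (inv\<^bsub>VG\<^esub> u))"
    using as iy y iu by simp
  also have "\<dots> = add x (inv\<^bsub>VG\<^esub> u)"
    using Vl_inv[OF y] ax(6)[OF iu] by simp
  finally show ?thesis .
qed

lemma inv_w: "g \<in> carrier G \<Longrightarrow> inv\<^bsub>VG\<^esub> (w g) = add e (inv\<^bsub>VG\<^esub> (R g))"
proof -
  assume g: "g \<in> carrier G"
  have "inv\<^bsub>VG\<^esub> (add (R g) (inv\<^bsub>VG\<^esub> e)) = add (inv\<^bsub>VG\<^esub> (R g)) e"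
    using Vinv_mult[of "R g" "inv\<^bsub>VG\<^esub> e"] RH[OF g] eH Vinv_closed Vinv_inv by simp
  also have "\<dots> = add e (inv\<^bsub>VG\<^esub> (R g))" using ax(5)[OF Vinv_closed[OF RH[OF g]] eH] by simp
  finally show ?thesis unfolding w_def by simp
qed

lemma R_inv_e: "s \<in> carrier G \<Longrightarrow> R s = e \<Longrightarrow> R (inv\<^bsub>G\<^esub> s) = e"
proof -
  assume s: "s \<in> carrier G" "R s = e"
  have "R (inv\<^bsub>G\<^esub> s \<otimes>\<^bsub>G\<^esub> s) = R (inv\<^bsub>G\<^esub> s)" using Rmul_e[of "inv\<^bsub>G\<^esub> s" s] s by simp
  moreover have "inv\<^bsub>G\<^esub> s \<otimes>\<^bsub>G\<^esub> s = \<one>\<^bsub>G\<^esub>" using s by simp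
  ultimately show ?thesis using R1 by metis
qed

lemma bounded: "h \<in> generate G S \<Longrightarrow> \<exists>K. \<forall>\<^sub>F n in sequentially. N n (w h) \<le> K * M n"
proof (induction rule: generate.induct)
  case one
  show ?case using w_one N_z M_nonneg by (intro exI[of _ 0]) auto
next
  case (incl s)
  show ?case using M_ge[OF incl] by (intro exI[of _ 1]) auto
next
  case (inv s)
  have s: "s \<in> carrier G" using inv SG by auto
  have isG: "inv\<^bsub>G\<^esub> s \<in> carrier G" "inv\<^bsub>G\<^esub> s \<otimes>\<^bsub>G\<^esub> s = \<one>\<^bsub>G\<^esub>" using s by auto
  show ?case
  proof (cases "R s = e")
    case True
    then have "w (inv\<^bsub>G\<^esub> s) = z" using w_z_iff[OF isG(1)] R_inv_e s by simp
    then show ?thesis using N_z M_nonneg by (intro exI[of _ 0]) auto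
  next
    case False
    have ev: "\<forall>\<^sub>F n in sequentially. N n (add (R (inv\<^bsub>G\<^esub> s \<otimes>\<^bsub>G\<^esub> s)) (sc (-1) (R (inv\<^bsub>G\<^esub> s))))
       < 2 * N n (add (R s) (sc (-1) e))" using B'[OF isG(1) s False] .
    have eq1: "add (R (inv\<^bsub>G\<^esub> s \<otimes>\<^bsub>G\<^esub> s)) (sc (-1) (R (inv\<^bsub>G\<^esub> s))) = inv\<^bsub>VG\<^esub> (w (inv\<^bsub>G\<^esub> s))"
      using isG R1 scm1 RH inv_w by simp
    have eq2: "add (R s) (sc (-1) e) = w s" using w_alt s by simp
    show ?thesis
    proof (intro exI[of _ 2])
      show "\<forall>\<^sub>F n in sequentially. N n (w (inv\<^bsub>G\<^esub> s)) \<le> 2 * M n"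
        using ev
      proof eventually_elim
        case (elim n)
        then have "N n (w (inv\<^bsub>G\<^esub> s)) < 2 * N n (w s)" using eq1 eq2 N_inv wH isG by simp
        then show ?case using M_ge[OF inv, of n] by linarith
      qed
    qed
  qed
next
  case (eng g h)
  have g: "g \<in> carrier G" and h: "h \<in> carrier G" using eng gen by auto
  obtain K1 where K1: "\<forall>\<^sub>F n in sequentially. N n (w g) \<le> K1 * M n" using eng by auto
  obtain K2 where K2: "\<forall>\<^sub>F n in sequentially. N n (w h) \<le> K2 * M n" using eng by auto
  show ?case
  proof (cases "R h = e")
    case True
    then have "w (g \<otimes>\<^bsub>G\<^esub> h) = w g" unfolding w_def using Rmul_e g h by simp
    then show ?thesis using K1 by auto
  next
    case False
    have ev: "\<forall>\<^sub>F n in sequentially. N n (add (R (g \<otimes>\<^bsub>G\<^esub> h)) (sc (-1) (R g)))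
       < 2 * N n (add (R h) (sc (-1) e))" using B'[OF g h False] .
    have gh: "g \<otimes>\<^bsub>G\<^esub> h \<in> carrier G" using g h by simp
    have eq: "w (g \<otimes>\<^bsub>G\<^esub> h) = add (add (R (g \<otimes>\<^bsub>G\<^esub> h)) (inv\<^bsub>VG\<^esub> (R g))) (w g)"
      unfolding w_def using grp_cancel[OF RH[OF gh] RH[OF g] eH] by simp
    show ?thesis
    proof (intro exI[of _ "2 * K2 + K1"])
      show "\<forall>\<^sub>F n in sequentially. N n (w (g \<otimes>\<^bsub>G\<^esub> h)) \<le> (2 * K2 + K1) * M n"
        using ev K1 K2
      proof eventually_elim
        case (elim n)
        have "N n (w (g \<otimes>\<^bsub>G\<^esub> h)) \<le> N n (add (R (g \<otimes>\<^bsub>G\<^esub> h)) (inv\<^bsub>VG\<^esub> (R g))) + N n (w g)"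
          unfolding eq using nax(4) RH[OF gh] RH[OF g] wH[OF g] V.inv_closed ax(2) by simp
        also have "N n (add (R (g \<otimes>\<^bsub>G\<^esub> h)) (inv\<^bsub>VG\<^esub> (R g))) < 2 * N n (w h)"
          using elim(1) scm1 RH[OF g] w_alt[OF h] by simp
        finally show ?case using elim(2,3) by (simp add: algebra_simps)
      qed
    qed
  qed
qed

definition Dfct :: "'g \<Rightarrow> 'g \<Rightarrow> 'm" where
  "Dfct g h = add (add (R (g \<otimes>\<^bsub>G\<^esub> h)) (inv\<^bsub>VG\<^esub> (R h))) (inv\<^bsub>VG\<^esub> (w g))"

lemma defect: "g \<in> carrier G \<Longrightarrow> h \<in> carrier G \<Longrightarrow> \<epsilon> > 0 \<Longrightarrow>
   \<forall>\<^sub>F n in sequentially. N n (Dfct g h) \<le> \<epsilon> * M n"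
proof -
  assume g: "g \<in> carrier G" and h: "h \<in> carrier G" and ep: "\<epsilon> > 0"
  show ?thesis
  proof (cases "R h = e")
    case True
    then have "Dfct g h = z" unfolding Dfct_def using Rmul_e[OF g h True] w_def[of g] wH[OF g]
      Vr_inv by simp
    then show ?thesis using N_z M_nonneg ep by simp
  next
    case False
    obtain K where K: "\<forall>\<^sub>F n in sequentially. N n (w h) \<le> K * M n" using bounded h gen by auto
    define K' where "K' = max K 1"
    have K'pos: "K' > 0" and KK': "K \<le> K'" unfolding K'_def by auto
    have ev: "\<forall>\<^sub>F n in sequentially. N n (add (add (R (g \<otimes>\<^bsub>G\<^esub> h)) (sc (-1) (R h))) (sc (-1) (add (R g) (sc (-1) e))))
        < (\<epsilon> / K') * N n (add (R h) (sc (-1) e))" using A'[OF g h False divide_pos_pos[OF ep K'pos]] .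
    have eq: "add (add (R (g \<otimes>\<^bsub>G\<^esub> h)) (sc (-1) (R h))) (sc (-1) (add (R g) (sc (-1) e))) = Dfct g h"
      unfolding Dfct_def using scm1 RH h w_alt[OF g] wH[OF g] by simp
    show ?thesis using ev K
    proof eventually_elim
      case (elim n)
      have "N n (Dfct g h) < (\<epsilon> / K') * N n (w h)" using elim(1) eq w_alt[OF h] by simp
      also have "\<dots> \<le> (\<epsilon> / K') * (K' * M n)"
      proof (rule mult_left_mono)
        show "N n (w h) \<le> K' * M n" using elim(2) KK' M_nonneg[of n] mult_right_mono by (smt (verit))
      qed (use ep K'pos in simp)
      also have "\<dots> = \<epsilon> * M n" using K'pos by simp
      finally show ?case by simp
    qed
  qed
qed


definition supp :: "('g \<Rightarrow> real) \<Rightarrow> 'g set" where "supp t = {x. t x \<noteq> 0}"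
definition TA :: "'g set \<Rightarrow> ('g \<Rightarrow> real) \<Rightarrow> 'm" where
  "TA A t = finprod VG (\<lambda>x. sc (of_real (t x)) (w x)) A"
definition T :: "('g \<Rightarrow> real) \<Rightarrow> 'm" where "T t = TA (supp t) t"
definition fs :: "('g \<Rightarrow> real) \<Rightarrow> bool" where "fs t \<longleftrightarrow> finite (supp t) \<and> supp t \<subseteq> carrier G"

lemma TA_Pi: "A \<subseteq> carrier G \<Longrightarrow> (\<lambda>x. sc (of_real (t x)) (w x)) \<in> A \<rightarrow> H"
  using ax(3) wH by auto

lemma TA_H: "A \<subseteq> carrier G \<Longrightarrow> TA A t \<in> H"
  unfolding TA_def using V.finprod_closed[of "\<lambda>x. sc (of_real (t x)) (w x)" A] TA_Pi[of A t] by simp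

lemma T_H: "fs t \<Longrightarrow> T t \<in> H"
  unfolding T_def fs_def using TA_H by simp

lemma TA_T: "finite A \<Longrightarrow> supp t \<subseteq> A \<Longrightarrow> A \<subseteq> carrier G \<Longrightarrow> TA A t = T t"
proof -
  assume A: "finite A" "supp t \<subseteq> A" "A \<subseteq> carrier G"
  have "finprod VG (\<lambda>x. sc (of_real (t x)) (w x)) (supp t) = finprod VG (\<lambda>x. sc (of_real (t x)) (w x)) A"
  proof (rule V.finprod_mono_neutral_cong_left)
    show "\<And>i. i \<in> A - supp t \<Longrightarrow> sc (of_real (t i)) (w i) = \<one>\<^bsub>VG\<^esub>"
      using A sc0 wH unfolding supp_def by auto
    show "(\<lambda>x. sc (of_real (t x)) (w x)) \<in> A \<rightarrow> carrier VG" using TA_Pi A by simp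
  qed (use A in auto)
  then show ?thesis unfolding TA_def T_def by simp
qed

lemma T_lin: "fs u \<Longrightarrow> fs v \<Longrightarrow> T (\<lambda>x. c * u x + v x) = add (sc (of_real c) (T u)) (T v)"
proof -
  assume u: "fs u" and v: "fs v"
  define A where "A = supp u \<union> supp v"
  have A: "finite A" "A \<subseteq> carrier G" using u v unfolding A_def fs_def by auto
  have sA: "supp (\<lambda>x. c * u x + v x) \<subseteq> A" unfolding A_def supp_def by auto
  have "T (\<lambda>x. c * u x + v x) = TA A (\<lambda>x. c * u x + v x)" using TA_T[OF A(1) sA A(2)] by simp
  also have "\<dots> = finprod VG (\<lambda>x. add (sc (of_real c) (sc (of_real (u x)) (w x))) (sc (of_real (v x)) (w x))) A"
    unfolding TA_def
  proof (rule V.finprod_cong')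
    show "(\<lambda>x. add (sc (of_real c) (sc (of_real (u x)) (w x))) (sc (of_real (v x)) (w x))) \<in> A \<rightarrow> carrier VG"
      using A(2) wH ax(2,3) by auto
    show "\<And>i. i \<in> A \<Longrightarrow> sc (of_real (c * u i + v i)) (w i) = add (sc (of_real c) (sc (of_real (u i)) (w i))) (sc (of_real (v i)) (w i))"
      using A(2) wH ax(9,11) by auto
  qed simp
  also have "\<dots> = add (finprod VG (\<lambda>x. sc (of_real c) (sc (of_real (u x)) (w x))) A) (finprod VG (\<lambda>x. sc (of_real (v x)) (w x)) A)"
  proof -
    have p1: "(\<lambda>x. sc (of_real c) (sc (of_real (u x)) (w x))) \<in> A \<rightarrow> carrier VG" using A(2) wH ax(3) by auto
    have p2: "(\<lambda>x. sc (of_real (v x)) (w x)) \<in> A \<rightarrow> carrier VG" using A(2) wH ax(3) by auto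
    show ?thesis using V.finprod_multf[OF p1 p2] by simp
  qed
  also have "\<dots> = add (sc (of_real c) (TA A u)) (TA A v)"
    unfolding TA_def using sc_finprod[OF A(1) TA_Pi[OF A(2), of u]] by simp
  also have "\<dots> = add (sc (of_real c) (T u)) (T v)"
    using TA_T A u v unfolding A_def fs_def by auto
  finally show ?thesis .
qed

lemma fs_lin: "fs u \<Longrightarrow> fs v \<Longrightarrow> fs (\<lambda>x. c * u x + v x)"
proof -
  assume u: "fs u" and v: "fs v"
  have "supp (\<lambda>x. c * u x + v x) \<subseteq> supp u \<union> supp v" unfolding supp_def by auto
  then show ?thesis using u v unfolding fs_def by (meson finite_UnI finite_subset le_sup_iff subset_trans)
qed

lemma supp0: "supp (\<lambda>x. 0) = {}" unfolding supp_def by simp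

lemma fs0: "fs (\<lambda>x. 0)" unfolding fs_def supp0 by simp

lemma T0: "T (\<lambda>x. 0) = z" unfolding T_def TA_def supp0 by simp

lemma fs_dl: "x \<in> carrier G \<Longrightarrow> fs (dl x)" unfolding fs_def supp_def dl_def by auto

lemma T_dl: "x \<in> carrier G \<Longrightarrow> T (dl x) = w x"
proof -
  assume x: "x \<in> carrier G"
  have "supp (dl x) = {x}" unfolding supp_def dl_def by auto
  then have "T (dl x) = finprod VG (\<lambda>y. sc (of_real (dl x y)) (w y)) (insert x {})" unfolding T_def TA_def by simp
  also have "\<dots> = add (sc (of_real (dl x x)) (w x)) z"
    using V.finprod_insert[of "{}" x "\<lambda>y. sc (of_real (dl x y)) (w y)"] x wH ax(3) by simp
  also have "\<dots> = w x" unfolding dl_def using ax(8) wH[OF x] Vr_one by simp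
  finally show ?thesis .
qed

definition E :: "('g \<Rightarrow> real) set" where
  "E = {(\<lambda>y. dl (g \<otimes>\<^bsub>G\<^esub> h) y - dl g y - dl h y) | g h. g \<in> carrier G \<and> h \<in> carrier G}"

lemma T_E: "g \<in> carrier G \<Longrightarrow> h \<in> carrier G \<Longrightarrow>
   fs (\<lambda>y. dl (g \<otimes>\<^bsub>G\<^esub> h) y - dl g y - dl h y) \<and> T (\<lambda>y. dl (g \<otimes>\<^bsub>G\<^esub> h) y - dl g y - dl h y) = Dfct g h"
proof -
  assume g: "g \<in> carrier G" and h: "h \<in> carrier G"
  have gh: "g \<otimes>\<^bsub>G\<^esub> h \<in> carrier G" using g h by simp
  have eqf: "(\<lambda>y. dl (g \<otimes>\<^bsub>G\<^esub> h) y - dl g y - dl h y)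
     = (\<lambda>y. 1 * dl (g \<otimes>\<^bsub>G\<^esub> h) y + ((-1) * dl g y + ((-1) * dl h y + 0)))" by (auto simp: fun_eq_iff)
  have f3: "fs (\<lambda>y. (-1) * dl h y + 0)" by (rule fs_lin[OF fs_dl[OF h] fs0])
  have f2: "fs (\<lambda>y. (-1) * dl g y + ((-1) * dl h y + 0))" by (rule fs_lin[OF fs_dl[OF g] f3])
  have f1: "fs (\<lambda>y. 1 * dl (g \<otimes>\<^bsub>G\<^esub> h) y + ((-1) * dl g y + ((-1) * dl h y + 0)))"
    by (rule fs_lin[OF fs_dl[OF gh] f2])
  have e1: "T (\<lambda>y. 1 * dl (g \<otimes>\<^bsub>G\<^esub> h) y + ((-1) * dl g y + ((-1) * dl h y + 0)))
     = add (sc (of_real 1) (T (dl (g \<otimes>\<^bsub>G\<^esub> h)))) (T (\<lambda>y. (-1) * dl g y + ((-1) * dl h y + 0)))"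
    by (rule T_lin[OF fs_dl[OF gh] f2])
  have e2: "T (\<lambda>y. (-1) * dl g y + ((-1) * dl h y + 0))
     = add (sc (of_real (-1)) (T (dl g))) (T (\<lambda>y. (-1) * dl h y + 0))"
    by (rule T_lin[OF fs_dl[OF g] f3])
  have e3: "T (\<lambda>y. (-1) * dl h y + 0) = add (sc (of_real (-1)) (T (dl h))) (T (\<lambda>y. 0))"
    by (rule T_lin[OF fs_dl[OF h] fs0])
  have "T (\<lambda>y. 1 * dl (g \<otimes>\<^bsub>G\<^esub> h) y + ((-1) * dl g y + ((-1) * dl h y + 0)))
     = add (sc 1 (w (g \<otimes>\<^bsub>G\<^esub> h))) (add (sc (-1) (w g)) (add (sc (-1) (w h)) z))"
    unfolding e1 e2 e3 T0 T_dl[OF g] T_dl[OF h] T_dl[OF gh] by simp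
  also have "\<dots> = add (w (g \<otimes>\<^bsub>G\<^esub> h)) (add (inv\<^bsub>VG\<^esub> (w g)) (inv\<^bsub>VG\<^esub> (w h)))"
    using ax(8) scm1 wH g h gh Vr_one Vinv_closed by simp
  also have "\<dots> = add (add (w (g \<otimes>\<^bsub>G\<^esub> h)) (inv\<^bsub>VG\<^esub> (w h))) (inv\<^bsub>VG\<^esub> (w g))"
    using ax(5)[OF Vinv_closed[OF wH[OF g]] Vinv_closed[OF wH[OF h]]]
      Vassoc[OF wH[OF gh] Vinv_closed[OF wH[OF h]] Vinv_closed[OF wH[OF g]]] by simp
  also have "add (w (g \<otimes>\<^bsub>G\<^esub> h)) (inv\<^bsub>VG\<^esub> (w h)) = add (R (g \<otimes>\<^bsub>G\<^esub> h)) (inv\<^bsub>VG\<^esub> (R h))"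
    unfolding inv_w[OF h] using grp_cancel[OF RH[OF gh] eH RH[OF h]] unfolding w_def by simp
  finally have calc: "T (\<lambda>y. 1 * dl (g \<otimes>\<^bsub>G\<^esub> h) y + ((-1) * dl g y + ((-1) * dl h y + 0))) = Dfct g h"
    unfolding Dfct_def .
  show ?thesis unfolding eqf by (intro conjI f1 calc)
qed

lemma span_small: "t \<in> fv.vs1.span E \<Longrightarrow> fs t \<and> (\<forall>\<epsilon>>0. \<forall>\<^sub>F n in sequentially. N n (T t) \<le> \<epsilon> * M n)"
proof (induction rule: fv.vs1.span_induct_alt)
  case base
  have "(0 :: 'g \<Rightarrow> real) = (\<lambda>x. 0)" by auto
  then show ?case using fs0 T0 N_z M_nonneg by simp
next
  case (step c x y)
  obtain g h where gh: "g \<in> carrier G" "h \<in> carrier G" and x: "x = (\<lambda>y. dl (g \<otimes>\<^bsub>G\<^esub> h) y - dl g y - dl h y)"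
    using step(1) unfolding E_def by auto
  have fx: "fs x" and Tx: "T x = Dfct g h" using T_E[OF gh] x by auto
  have fy: "fs y" using step(2) by auto
  have eqf: "(\<lambda>xa. c * x xa) + y = (\<lambda>xa. c * x xa + y xa)" by (auto simp: fun_eq_iff)
  have Tlin: "T (\<lambda>xa. c * x xa + y xa) = add (sc (of_real c) (T x)) (T y)" using T_lin[OF fx fy] .
  show ?case unfolding eqf
  proof (intro conjI allI impI)
    show "fs (\<lambda>xa. c * x xa + y xa)" using fs_lin[OF fx fy] .
    fix \<epsilon> :: real assume ep: "\<epsilon> > 0"
    define \<delta> where "\<delta> = \<epsilon> / (2 * (\<bar>c\<bar> + 1))"
    have dpos: "\<delta> > 0" unfolding \<delta>_def using ep by (simp add: add_pos_nonneg)
    have ev1: "\<forall>\<^sub>F n in sequentially. N n (T x) \<le> \<delta> * M n" using defect[OF gh dpos] Tx by simp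
    have ev2: "\<forall>\<^sub>F n in sequentially. N n (T y) \<le> (\<epsilon>/2) * M n" using step(2)[THEN conjunct2, rule_format, of "\<epsilon>/2"] ep by simp
    show "\<forall>\<^sub>F n in sequentially. N n (T (\<lambda>xa. c * x xa + y xa)) \<le> \<epsilon> * M n"
      using ev1 ev2
    proof eventually_elim
      case (elim n)
      have "N n (T (\<lambda>xa. c * x xa + y xa)) \<le> \<bar>c\<bar> * N n (T x) + N n (T y)"
        unfolding Tlin using nax(4)[where n=n, OF ax(3)[OF T_H[OF fx], of "of_real c"] T_H[OF fy]]
          N_real[where n=n and c=c, OF T_H[OF fx]] by simp
      also have "\<dots> \<le> \<bar>c\<bar> * (\<delta> * M n) + (\<epsilon>/2) * M n"
        using elim mult_left_mono[OF elim(1), of "\<bar>c\<bar>"] by simp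
      also have "\<dots> \<le> (\<epsilon>/2) * M n + (\<epsilon>/2) * M n"
      proof -
        have "\<bar>c\<bar> * \<delta> \<le> \<epsilon>/2" unfolding \<delta>_def using ep
          by (simp add: field_simps)
        then have "\<bar>c\<bar> * (\<delta> * M n) \<le> (\<epsilon>/2) * M n"
          using M_nonneg[of n] mult_right_mono by (metis mult.assoc)
        then show ?thesis by simp
      qed
      finally show ?case by simp
    qed
  qed
qed

lemma not_all_span: "\<not> (\<forall>s\<in>S. dl s \<in> fv.vs1.span E)"
proof
  assume all: "\<forall>s\<in>S. dl s \<in> fv.vs1.span E"
  have "\<forall>s\<in>S. \<forall>\<^sub>F n in sequentially. N n (w s) \<le> (1/2) * M n"
  proof
    fix s assume s: "s \<in> S"
    then have sG: "s \<in> carrier G" using SG by auto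
    show "\<forall>\<^sub>F n in sequentially. N n (w s) \<le> (1/2) * M n"
      using span_small[OF all[rule_format, OF s], THEN conjunct2, rule_format, of "1/2"] T_dl[OF sG] by simp
  qed
  then have "\<forall>\<^sub>F n in sequentially. \<forall>s\<in>S. N n (w s) \<le> (1/2) * M n"
    using eventually_ball_finite[OF finS] by simp
  then obtain n where n: "\<forall>s\<in>S. N n (w s) \<le> (1/2) * M n"
    unfolding eventually_sequentially by auto
  obtain s where s: "s \<in> S" "M n = N n (w s)" using M_attained by blast
  have "N n (w s) \<le> (1/2) * M n" using n s(1) by blast
  then show False using s(2) M_pos[of n] by linarith
qed

lemma core_hom: "\<exists>\<psi>::'g \<Rightarrow> real. (\<forall>x\<in>carrier G. \<forall>y\<in>carrier G. \<psi> (x \<otimes>\<^bsub>G\<^esub> y) = \<psi> x + \<psi> y)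
   \<and> (\<exists>x\<in>carrier G. \<psi> x \<noteq> 0)"
proof -
  obtain s where s: "s \<in> S" "dl s \<notin> fv.vs1.span E" using not_all_span by auto
  obtain B0 where B0: "B0 \<subseteq> E" "fv.vs1.independent B0" "E \<subseteq> fv.vs1.span B0"
    using fv.vs1.maximal_independent_subset[of E] by blast
  have nsp: "dl s \<notin> fv.vs1.span B0" using s(2) fv.vs1.span_mono[OF B0(1)] by auto
  have ind: "fv.vs1.independent (insert (dl s) B0)" using fv.vs1.independent_insertI[OF nsp B0(2)] .
  obtain l where l: "Vector_Spaces.linear (\<lambda>c (f::'g \<Rightarrow> real) x. c * f x) ((*) :: real \<Rightarrow> real \<Rightarrow> real) l"
    "\<forall>v\<in>insert (dl s) B0. l v = (if v = dl s then 1 else 0)"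
    using fv.linear_independent_extend[OF ind, of "\<lambda>v. if v = dl s then 1 else 0"] by blast
  have l0: "l v = 0" if v: "v \<in> B0" for v
  proof -
    have "v \<noteq> dl s" using nsp fv.vs1.span_base[OF v] by auto
    then show ?thesis using l(2) v by auto
  qed
  have lE: "\<And>v. v \<in> E \<Longrightarrow> l v = 0" using fv.linear_eq_0_on_span[OF l(1) l0] B0(3) by auto
  have ls: "l (dl s) = 1" using l(2) by simp
  show ?thesis
  proof (intro exI[of _ "\<lambda>x. l (dl x)"] conjI)
    show "\<forall>x\<in>carrier G. \<forall>y\<in>carrier G. l (dl (x \<otimes>\<^bsub>G\<^esub> y)) = l (dl x) + l (dl y)"
    proof (intro ballI)
      fix x y assume x: "x \<in> carrier G" and y: "y \<in> carrier G"
      have "(\<lambda>u. dl (x \<otimes>\<^bsub>G\<^esub> y) u - dl x u - dl y u) \<in> E" unfolding E_def using x y by blast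
      then have "l (\<lambda>u. dl (x \<otimes>\<^bsub>G\<^esub> y) u - dl x u - dl y u) = 0" by (rule lE)
      moreover have "(\<lambda>u. dl (x \<otimes>\<^bsub>G\<^esub> y) u - dl x u - dl y u) = (dl (x \<otimes>\<^bsub>G\<^esub> y) - dl x) - dl y"
        by (auto simp: fun_eq_iff)
      ultimately have "l ((dl (x \<otimes>\<^bsub>G\<^esub> y) - dl x) - dl y) = 0" by simp
      then show "l (dl (x \<otimes>\<^bsub>G\<^esub> y)) = l (dl x) + l (dl y)"
        using fv.linear_diff[OF l(1)] by simp
    qed
    show "\<exists>x\<in>carrier G. l (dl x) \<noteq> 0" using s(1) SG ls by (intro bexI[of _ s]) auto
  qed
qed

end


lemma limsup_ev:
  assumes "limsup (\<lambda>n. ereal (f n)) \<le> ereal L" "L < y"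
  shows "\<forall>\<^sub>F n in sequentially. f n < y"
proof -
  have "ereal L < ereal y" using assms(2) by simp
  then have "limsup (\<lambda>n. ereal (f n)) < ereal y" using le_less_trans[OF assms(1)] by blast
  then have "\<forall>\<^sub>F n in sequentially. ereal (f n) < ereal y" by (rule Limsup_lessD)
  then show ?thesis by simp
qed

theorem theorem3p17:
  fixes G :: "('g, 'x) monoid_scheme"
    and C :: "('o, 'm, 'f::real_normed_field) lincat"
    and Do :: "'o \<Rightarrow> 'p" and Dm :: "'m \<Rightarrow> 'n"
    and B :: "('p, 'n, 'f) lincat" and NB :: "'p \<Rightarrow> 'p \<Rightarrow> 'n \<Rightarrow> real"
    and a :: 'o and R :: "'g \<Rightarrow> 'm"
  assumes "finitely_generated_group G"
    and "differential_category C Do Dm B NB"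
    and "representation G C a R"
  shows "trivial_representation G C a R
      \<or> \<not> trivial_representation G B (Do a) (Dm \<circ> R)
      \<or> (\<exists>\<phi> :: 'g \<Rightarrow> 'f. (\<forall>x\<in>carrier G. \<forall>y\<in>carrier G. \<phi> (x \<otimes>\<^bsub>G\<^esub> y) = \<phi> x + \<phi> y)
                         \<and> (\<exists>x\<in>carrier G. \<phi> x \<noteq> 0))"
proof -
  consider (triv) "trivial_representation G C a R" | (nt) "\<not> trivial_representation G B (Do a) (Dm \<circ> R)"
    | (main) "\<not> trivial_representation G C a R" "trivial_representation G B (Do a) (Dm \<circ> R)" by blast
  then show ?thesis
  proof cases
    case main
    obtain S where grp: "group G" and finS: "finite S" and SG: "S \<subseteq> carrier G" and gen: "generate G S = carrier G"
      using assms(1) unfolding finitely_generated_group_def by auto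
    have rlc: "right_linear_category C" and bc: "banach_category B NB" and lf: "linear_functor C B Do Dm"
      using assms(2) unfolding differential_category_def by auto
    have ex: "\<exists>nu :: nat \<Rightarrow> 'o \<Rightarrow> 'o \<Rightarrow> 'm \<Rightarrow> real. (\<forall>n\<ge>1. \<forall>a\<in>Obj C. \<forall>a'\<in>Obj C.
           norm_on (Hom C a a') (addm C a a') (scalem C a a') (zerom C a a') (nu n a a')) \<and> (\<forall>a\<in>Obj C. \<forall>a'\<in>Obj C. \<forall>a''\<in>Obj C. \<forall>c\<in>Hom C a' a''.
           \<forall>c'\<in>Hom C a a'. \<forall>c''\<in>Hom C a a'. c' \<noteq> c'' \<longrightarrow>
             limsup (\<lambda>n. ereal (nu (Suc n) a a'' (subm C a a'' (cmp C c c') (cmp C c c''))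
                                / nu (Suc n) a a' (subm C a a' c' c'')))
               \<le> ereal (NB (Do a') (Do a'') (Dm c)))"
      using assms(2) unfolding differential_category_def by (elim conjE)
    from ex obtain nu :: "nat \<Rightarrow> 'o \<Rightarrow> 'o \<Rightarrow> 'm \<Rightarrow> real" where nuP: "(\<forall>n\<ge>1. \<forall>a\<in>Obj C. \<forall>a'\<in>Obj C.
           norm_on (Hom C a a') (addm C a a') (scalem C a a') (zerom C a a') (nu n a a')) \<and> (\<forall>a\<in>Obj C. \<forall>a'\<in>Obj C. \<forall>a''\<in>Obj C. \<forall>c\<in>Hom C a' a''.
           \<forall>c'\<in>Hom C a a'. \<forall>c''\<in>Hom C a a'. c' \<noteq> c'' \<longrightarrow>
             limsup (\<lambda>n. ereal (nu (Suc n) a a'' (subm C a a'' (cmp C c c') (cmp C c c''))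
                                / nu (Suc n) a a' (subm C a a' c' c'')))
               \<le> ereal (NB (Do a') (Do a'') (Dm c)))" ..
    note nu1 = nuP[THEN conjunct1] and nu2 = nuP[THEN conjunct2]
    have aC: "a \<in> Obj C" and RHom: "\<And>g. g \<in> carrier G \<Longrightarrow> R g \<in> Hom C a a"
      and R1: "R \<one>\<^bsub>G\<^esub> = idm C a"
      and Rmul: "\<And>x y. x \<in> carrier G \<Longrightarrow> y \<in> carrier G \<Longrightarrow> R (x \<otimes>\<^bsub>G\<^esub> y) = cmp C (R x) (R y)"
      using assms(3) unfolding representation_def by auto
    have cat: "is_category C" using rlc unfolding right_linear_category_def by auto
    have vsC: "vector_space_on (Hom C a a) (addm C a a) (scalem C a a) (zerom C a a)"
      using rlc aC unfolding right_linear_category_def by auto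
    have rlin: "\<And>c. c \<in> Hom C a a \<Longrightarrow> linear_map_on (Hom C a a) (addm C a a) (scalem C a a)
                      (Hom C a a) (addm C a a) (scalem C a a) (\<lambda>f. cmp C f c)"
      using rlc aC unfolding right_linear_category_def by blast
    have idH: "idm C a \<in> Hom C a a" using cat aC unfolding is_category_def by auto
    have idR: "\<And>f. f \<in> Hom C a a \<Longrightarrow> cmp C f (idm C a) = f \<and> cmp C (idm C a) f = f"
      using cat aC unfolding is_category_def by blast
    have DoB: "Do a \<in> Obj B" using lf aC unfolding linear_functor_def by auto
    have vsB: "vector_space_on (Hom B (Do a) (Do a)) (addm B (Do a) (Do a)) (scalem B (Do a) (Do a)) (zerom B (Do a) (Do a))"
      using bc DoB unfolding banach_category_def linear_category_def right_linear_category_def by auto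
    have nB: "norm_on (Hom B (Do a) (Do a)) (addm B (Do a) (Do a)) (scalem B (Do a) (Do a)) (zerom B (Do a) (Do a)) (NB (Do a) (Do a))"
      using bc DoB unfolding banach_category_def by auto
    have NB1: "NB (Do a) (Do a) (idm B (Do a)) = 1" using bc DoB unfolding banach_category_def by auto
    have NB0: "NB (Do a) (Do a) (zerom B (Do a) (Do a)) = 0"
      using nB vsB unfolding norm_on_def vector_space_on_def by auto
    have idBH: "idm B (Do a) \<in> Hom B (Do a) (Do a)"
      using bc DoB unfolding banach_category_def linear_category_def right_linear_category_def is_category_def by auto
    have Did: "Dm (idm C a) = idm B (Do a)" using lf aC unfolding linear_functor_def by auto
    have Dlin: "linear_map_on (Hom C a a) (addm C a a) (scalem C a a)
                      (Hom B (Do a) (Do a)) (addm B (Do a) (Do a)) (scalem B (Do a) (Do a)) Dm"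
      using lf aC unfolding linear_functor_def by auto
    have Dtriv: "\<And>g. g \<in> carrier G \<Longrightarrow> Dm (R g) = idm B (Do a)"
      using main(2) unfolding trivial_representation_def by auto
    interpret VC: vsp "Hom C a a" "addm C a a" "scalem C a a" "zerom C a a" by (rule vsp.intro[OF vsC])
    interpret VB: vsp "Hom B (Do a) (Do a)" "addm B (Do a) (Do a)" "scalem B (Do a) (Do a)" "zerom B (Do a) (Do a)"
      by (rule vsp.intro[OF vsB])
    have Rmul_e: "\<And>g h. g \<in> carrier G \<Longrightarrow> h \<in> carrier G \<Longrightarrow> R h = idm C a \<Longrightarrow> R (g \<otimes>\<^bsub>G\<^esub> h) = R g"
      using Rmul idR RHom by metis
    interpret Gp: group G by (rule grp)
    have nontriv: "\<exists>s\<in>S. R s \<noteq> idm C a"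
    proof (rule ccontr)
      assume "\<not> (\<exists>s\<in>S. R s \<noteq> idm C a)"
      then have allS: "\<And>s. s \<in> S \<Longrightarrow> R s = idm C a" by auto
      have "R g = idm C a" if "g \<in> generate G S" for g
        using that
      proof (induction rule: generate.induct)
        case one then show ?case using R1 .
      next
        case (incl h) then show ?case using allS by auto
      next
        case (inv h)
        then have h: "h \<in> carrier G" "R h = idm C a" using SG allS by auto
        have "R (inv\<^bsub>G\<^esub> h \<otimes>\<^bsub>G\<^esub> h) = R (inv\<^bsub>G\<^esub> h)" using Rmul_e[of "inv\<^bsub>G\<^esub> h" h] h by simp
        moreover have "inv\<^bsub>G\<^esub> h \<otimes>\<^bsub>G\<^esub> h = \<one>\<^bsub>G\<^esub>" using h by simp
        ultimately show ?case using R1 by metis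
      next
        case (eng g h)
        then show ?case using Rmul_e gen by auto
      qed
      then have "trivial_representation G C a R" using gen unfolding trivial_representation_def by auto
      then show False using main(1) by simp
    qed
    have lim: "\<And>c c' c''. c \<in> Hom C a a \<Longrightarrow> c' \<in> Hom C a a \<Longrightarrow> c'' \<in> Hom C a a \<Longrightarrow> c' \<noteq> c'' \<Longrightarrow>
             limsup (\<lambda>n. ereal (nu (Suc n) a a (subm C a a (cmp C c c') (cmp C c c''))
                                / nu (Suc n) a a (subm C a a c' c'')))
               \<le> ereal (NB (Do a) (Do a) (Dm c))"
      using nu2 aC by blast
    have cmp_add: "\<And>x y c. x \<in> Hom C a a \<Longrightarrow> y \<in> Hom C a a \<Longrightarrow> c \<in> Hom C a a \<Longrightarrow>
        cmp C (addm C a a x y) c = addm C a a (cmp C x c) (cmp C y c)"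
      using rlin unfolding linear_map_on_def by blast
    have cmp_sc: "\<And>x k c. x \<in> Hom C a a \<Longrightarrow> c \<in> Hom C a a \<Longrightarrow>
        cmp C (scalem C a a k x) c = scalem C a a k (cmp C x c)"
      using rlin unfolding linear_map_on_def by blast
    have D_add: "\<And>x y. x \<in> Hom C a a \<Longrightarrow> y \<in> Hom C a a \<Longrightarrow> Dm (addm C a a x y) = addm B (Do a) (Do a) (Dm x) (Dm y)"
      using Dlin unfolding linear_map_on_def by blast
    have D_sc: "\<And>x k. x \<in> Hom C a a \<Longrightarrow> Dm (scalem C a a k x) = scalem B (Do a) (Do a) k (Dm x)"
      using Dlin unfolding linear_map_on_def by blast
    interpret core "Hom C a a" "addm C a a" "scalem C a a" "zerom C a a" "\<lambda>n. nu (Suc n) a a" G S R "idm C a"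
    proof (intro core.intro vsp.intro core_axioms.intro)
      show "vector_space_on (Hom C a a) (addm C a a) (scalem C a a) (zerom C a a)" by (rule vsC)
      show "\<And>n. norm_on (Hom C a a) (addm C a a) (scalem C a a) (zerom C a a) (nu (Suc n) a a)"
        using nu1 aC by auto
      show "group G" by (rule grp)
      show "finite S" by (rule finS)
      show "S \<subseteq> carrier G" by (rule SG)
      show "generate G S = carrier G" by (rule gen)
      show "\<And>g. g \<in> carrier G \<Longrightarrow> R g \<in> Hom C a a" by (rule RHom)
      show "idm C a \<in> Hom C a a" by (rule idH)
      show "R \<one>\<^bsub>G\<^esub> = idm C a" by (rule R1)
      show "\<And>g h. g \<in> carrier G \<Longrightarrow> h \<in> carrier G \<Longrightarrow> R h = idm C a \<Longrightarrow> R (g \<otimes>\<^bsub>G\<^esub> h) = R g"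
        by (rule Rmul_e)
      show "\<exists>s\<in>S. R s \<noteq> idm C a" by (rule nontriv)
    next
      fix g h and \<epsilon> :: real
      assume g: "g \<in> carrier G" and h: "h \<in> carrier G" and ne: "R h \<noteq> idm C a" and ep: "\<epsilon> > 0"
      define c where "c = subm C a a (R g) (idm C a)"
      have cH: "c \<in> Hom C a a" unfolding c_def subm_def using VC.ax(2,3) RHom[OF g] idH by simp
      have c_alt: "c = addm C a a (R g) (scalem C a a (-1) (idm C a))" unfolding c_def subm_def ..
      have Dc: "Dm c = zerom B (Do a) (Do a)"
        unfolding c_alt using D_add[OF RHom[OF g] VC.ax(3)[OF idH]] D_sc[OF idH] Dtriv[OF g] Did
          VB.add_neg_self[OF idBH] by simp
      have num: "subm C a a (cmp C c (R h)) (cmp C c (idm C a))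
         = addm C a a (addm C a a (R (g \<otimes>\<^bsub>G\<^esub> h)) (scalem C a a (-1) (R h)))
             (scalem C a a (-1) (addm C a a (R g) (scalem C a a (-1) (idm C a))))"
      proof -
        have "cmp C c (idm C a) = c" using idR[OF cH] by simp
        moreover have "cmp C c (R h) = addm C a a (R (g \<otimes>\<^bsub>G\<^esub> h)) (scalem C a a (-1) (R h))"
          unfolding c_alt using cmp_add[OF RHom[OF g] VC.ax(3)[OF idH] RHom[OF h]]
            cmp_sc[OF idH RHom[OF h]] idR[OF RHom[OF h]] Rmul[OF g h] by simp
        ultimately show ?thesis unfolding subm_def c_alt by simp
      qed
      have den: "subm C a a (R h) (idm C a) = addm C a a (R h) (scalem C a a (-1) (idm C a))"
        unfolding subm_def ..
      have "limsup (\<lambda>n. ereal (nu (Suc n) a a (subm C a a (cmp C c (R h)) (cmp C c (idm C a)))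
                                / nu (Suc n) a a (subm C a a (R h) (idm C a)))) \<le> ereal 0"
        using lim[OF cH RHom[OF h] idH ne] Dc NB0 by simp
      from limsup_ev[OF this ep]
      show "\<forall>\<^sub>F n in sequentially. nu (Suc n) a a (addm C a a (addm C a a (R (g \<otimes>\<^bsub>G\<^esub> h)) (scalem C a a (-1) (R h)))
             (scalem C a a (-1) (addm C a a (R g) (scalem C a a (-1) (idm C a))))) /
          nu (Suc n) a a (addm C a a (R h) (scalem C a a (-1) (idm C a))) < \<epsilon>"
        unfolding num den .
    next
      fix g h
      assume g: "g \<in> carrier G" and h: "h \<in> carrier G" and ne: "R h \<noteq> idm C a"
      have num: "subm C a a (cmp C (R g) (R h)) (cmp C (R g) (idm C a))
         = addm C a a (R (g \<otimes>\<^bsub>G\<^esub> h)) (scalem C a a (-1) (R g))"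
        unfolding subm_def using idR[OF RHom[OF g]] Rmul[OF g h] by simp
      have den: "subm C a a (R h) (idm C a) = addm C a a (R h) (scalem C a a (-1) (idm C a))"
        unfolding subm_def ..
      have "limsup (\<lambda>n. ereal (nu (Suc n) a a (subm C a a (cmp C (R g) (R h)) (cmp C (R g) (idm C a)))
                                / nu (Suc n) a a (subm C a a (R h) (idm C a)))) \<le> ereal 1"
        using lim[OF RHom[OF g] RHom[OF h] idH ne] Dtriv[OF g] NB1 by simp
      from limsup_ev[OF this, of 2]
      show "\<forall>\<^sub>F n in sequentially. nu (Suc n) a a (addm C a a (R (g \<otimes>\<^bsub>G\<^esub> h)) (scalem C a a (-1) (R g))) /
          nu (Suc n) a a (addm C a a (R h) (scalem C a a (-1) (idm C a))) < 2"
        unfolding num den by simp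
    qed
    obtain \<psi> :: "'g \<Rightarrow> real" where psi: "\<forall>x\<in>carrier G. \<forall>y\<in>carrier G. \<psi> (x \<otimes>\<^bsub>G\<^esub> y) = \<psi> x + \<psi> y"
      "\<exists>x\<in>carrier G. \<psi> x \<noteq> 0" using core_hom by blast
    have "\<exists>\<phi> :: 'g \<Rightarrow> 'f. (\<forall>x\<in>carrier G. \<forall>y\<in>carrier G. \<phi> (x \<otimes>\<^bsub>G\<^esub> y) = \<phi> x + \<phi> y)
                         \<and> (\<exists>x\<in>carrier G. \<phi> x \<noteq> 0)"
      using psi by (intro exI[of _ "\<lambda>x. of_real (\<psi> x)"]) auto
    then show ?thesis by blast
  qed auto
qed

end
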